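(* Let $a_1,a_2,a_3,a_4>0$ satisfy $4a_2a_4>(a_1+a_3)^2$, let $z_0>0$, set $y_0=z_0a_1/a_2$ and $\beta=\frac12\sqrt{4a_2a_4-(a_1+a_3)^2}\in\mathbb{R}$. For $y'\in[0,y_0)$ let $\tau\mapsto(z(\tau,y'),y(\tau,y'))$ be the solution of $\dot z=a_1z-a_2y$, $\dot y=a_4z-a_3y$ with $(z(0),y(0))=(z_0,y')$, explicitly $$z(\tau,y')=e^{\frac{a_1-a_3}{2}\tau}\Big(z_0\cos\beta\tau+\Big(z_0\frac{a_1+a_3}{2\beta}-\frac{y'a_2}{\beta}\Big)\sin\beta\tau\Big),$$ $$y(\tau,y')=e^{\frac{a_1-a_3}{2}\tau}\Big(y'\cos\beta\tau+\Big(\frac{a_4z_0}{\beta}-y'\frac{a_1+a_3}{2\beta}\Big)\sin\beta\tau\Big).$$ Then for each $y'\in[0,y_0)$ there exist a unique $y^+=y^+(y')>y_0$ and a minimal $\tau_1=\tau_1(y')>0$ such that $z(\tau_1,y')=z_0$ and $y(\tau_1,y')=y^+$ (i.e. $\tau_1$ is the first positive time at which the trajectory from $(z_0,y')$ reaches the half-line $\{(z_0,y):y>y_0\}$). Moreover, $\tau_1$ does not depend on $z_0$: writing $y'=\alpha y_0$ with $\alpha$ fixed, $\tau_1$ is determined by $a_1,\dots,a_4,\alpha$ alone.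
   Context: This describes the within-host dynamics of an infected host with viral load $z\ge z_0$ ($z_0$ the minimum detectable viral load) and antibody level $y\ge0$. The time $\tau_1(y')$ is interpreted as the time an infected individual entering the infected compartment with antibody level $y'$ remains infected before transitioning to the recovered compartment. *)

theory Defs
  imports Complex_Main
begin

definition beta :: "real \<Rightarrow> real \<Rightarrow> real \<Rightarrow> real \<Rightarrow> real" where
  "beta a1 a2 a3 a4 = sqrt (4 * a2 * a4 - (a1 + a3)^2) / 2"

definition yzero :: "real \<Rightarrow> real \<Rightarrow> real \<Rightarrow> real" where
  "yzero a1 a2 z0 = z0 * a1 / a2"

text \<open>Explicit solution of z' = a1 z - a2 y, y' = a4 z - a3 y with (z(0), y(0)) = (z0, yp).\<close>
definition zsol :: "real \<Rightarrow> real \<Rightarrow> real \<Rightarrow> real \<Rightarrow> real \<Rightarrow> real \<Rightarrow> real \<Rightarrow> real" where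
  "zsol a1 a2 a3 a4 z0 yp t =
     exp ((a1 - a3) / 2 * t) *
       (z0 * cos (beta a1 a2 a3 a4 * t)
        + (z0 * (a1 + a3) / (2 * beta a1 a2 a3 a4) - yp * a2 / beta a1 a2 a3 a4)
          * sin (beta a1 a2 a3 a4 * t))"

definition ysol :: "real \<Rightarrow> real \<Rightarrow> real \<Rightarrow> real \<Rightarrow> real \<Rightarrow> real \<Rightarrow> real \<Rightarrow> real" where
  "ysol a1 a2 a3 a4 z0 yp t =
     exp ((a1 - a3) / 2 * t) *
       (yp * cos (beta a1 a2 a3 a4 * t)
        + (a4 * z0 / beta a1 a2 a3 a4 - yp * (a1 + a3) / (2 * beta a1 a2 a3 a4))
          * sin (beta a1 a2 a3 a4 * t))"

definition on_halfline :: "real \<Rightarrow> real \<Rightarrow> real \<Rightarrow> real \<Rightarrow> real \<Rightarrow> real \<Rightarrow> real \<Rightarrow> bool" where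
  "on_halfline a1 a2 a3 a4 z0 yp t \<longleftrightarrow>
     zsol a1 a2 a3 a4 z0 yp t = z0 \<and> ysol a1 a2 a3 a4 z0 yp t > yzero a1 a2 z0"

definition first_hit :: "real \<Rightarrow> real \<Rightarrow> real \<Rightarrow> real \<Rightarrow> real \<Rightarrow> real \<Rightarrow> real \<Rightarrow> bool" where
  "first_hit a1 a2 a3 a4 z0 yp t \<longleftrightarrow>
     t > 0 \<and> on_halfline a1 a2 a3 a4 z0 yp t \<and>
     (\<forall>s. 0 < s \<and> s < t \<longrightarrow> \<not> on_halfline a1 a2 a3 a4 z0 yp s)"

end

theory Submission
  imports Defs "HOL-Analysis.Analysis"
begin
lemma dgen:
  assumes "c*P + Q*b = D1" "c*Q - P*b = D2"
  shows "((\<lambda>t. exp (c * t) * (P * cos (b * t) + Q * sin (b * t))) has_real_derivative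
     (exp (c*t) * (D1 * cos (b*t) + D2 * sin (b*t)))) (at t)"
proof -
  have "((\<lambda>t. exp (c * t) * (P * cos (b * t) + Q * sin (b * t))) has_real_derivative
     (exp (c*t) * ((c*P + Q*b) * cos (b*t) + (c*Q - P*b) * sin (b*t)))) (at t)"
    by (rule derivative_eq_intros refl | simp)+ (simp add: algebra_simps)
  then show ?thesis using assms by simp
qed

lemma bfacts:
  assumes "4 * a2 * a4 > (a1 + a3)^2"
  shows "beta a1 a2 a3 a4 > 0" "(beta a1 a2 a3 a4)^2 = a2*a4 - ((a1+a3)/2)^2"
proof -
  have h: "4 * a2 * a4 - (a1 + a3)^2 > 0" using assms by simp
  show "beta a1 a2 a3 a4 > 0" using h by (simp add: beta_def)
  have "(beta a1 a2 a3 a4)^2 = (4 * a2 * a4 - (a1 + a3)^2) / 4"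
    unfolding beta_def using h by (simp add: power_divide)
  then show "(beta a1 a2 a3 a4)^2 = a2*a4 - ((a1+a3)/2)^2" by (simp add: power_divide field_simps)
qed

lemma dz:
  assumes "4 * a2 * a4 > (a1 + a3)^2"
  shows "(zsol a1 a2 a3 a4 z0 yp has_real_derivative (a1 * zsol a1 a2 a3 a4 z0 yp t - a2 * ysol a1 a2 a3 a4 z0 yp t)) (at t)"
proof -
  define b where "b = beta a1 a2 a3 a4"
  have b: "b > 0" "b*b = a2*a4 - ((a1+a3)/2)^2" using bfacts[OF assms] unfolding b_def by (auto simp: power2_eq_square)
  have a2: "a2 \<noteq> 0" using assms by auto
  have a4: "a4 = (b*b + ((a1+a3)/2)^2)/a2" using b(2) a2 by (simp add: field_simps)
  define K where "K = z0 * (a1 + a3) / (2 * b) - yp * a2 / b"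
  define L where "L = a4 * z0 / b - yp * (a1 + a3) / (2 * b)"
  have D: "((\<lambda>t. exp ((a1 - a3) / 2 * t) * (z0 * cos (b * t) + K * sin (b * t))) has_real_derivative
     (exp ((a1 - a3) / 2 * t) * ((a1*z0 - a2*yp) * cos (b*t) + (a1*K - a2*L) * sin (b*t)))) (at t)"
    apply (rule dgen)
    using b unfolding K_def L_def by (auto simp: field_simps power2_eq_square a4 a2)
  have E: "exp ((a1 - a3) / 2 * t) * ((a1*z0 - a2*yp) * cos (b*t) + (a1*K - a2*L) * sin (b*t))
     = a1 * zsol a1 a2 a3 a4 z0 yp t - a2 * ysol a1 a2 a3 a4 z0 yp t"
    unfolding zsol_def ysol_def b_def[symmetric] K_def[symmetric] L_def[symmetric] by (simp add: algebra_simps)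
  have fz: "zsol a1 a2 a3 a4 z0 yp = (\<lambda>t. exp ((a1 - a3) / 2 * t) * (z0 * cos (b * t) + K * sin (b * t)))"
    by (rule ext) (simp add: zsol_def b_def K_def)
  have "(zsol a1 a2 a3 a4 z0 yp has_real_derivative (exp ((a1 - a3) / 2 * t) * ((a1*z0 - a2*yp) * cos (b*t) + (a1*K - a2*L) * sin (b*t)))) (at t)"
    unfolding fz by (rule D)
  then show ?thesis unfolding E .
qed

lemma dy:
  assumes "4 * a2 * a4 > (a1 + a3)^2"
  shows "(ysol a1 a2 a3 a4 z0 yp has_real_derivative (a4 * zsol a1 a2 a3 a4 z0 yp t - a3 * ysol a1 a2 a3 a4 z0 yp t)) (at t)"
proof -
  define b where "b = beta a1 a2 a3 a4"
  have b: "b > 0" "b*b = a2*a4 - ((a1+a3)/2)^2" using bfacts[OF assms] unfolding b_def by (auto simp: power2_eq_square)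
  have a2: "a2 \<noteq> 0" using assms by auto
  have a4: "a4 = (b*b + ((a1+a3)/2)^2)/a2" using b(2) a2 by (simp add: field_simps)
  define K where "K = z0 * (a1 + a3) / (2 * b) - yp * a2 / b"
  define L where "L = a4 * z0 / b - yp * (a1 + a3) / (2 * b)"
  have D: "((\<lambda>t. exp ((a1 - a3) / 2 * t) * (yp * cos (b * t) + L * sin (b * t))) has_real_derivative
     (exp ((a1 - a3) / 2 * t) * ((a4*z0 - a3*yp) * cos (b*t) + (a4*K - a3*L) * sin (b*t)))) (at t)"
    apply (rule dgen)
    using b unfolding K_def L_def by (auto simp: field_simps power2_eq_square a4 a2)
  have E: "exp ((a1 - a3) / 2 * t) * ((a4*z0 - a3*yp) * cos (b*t) + (a4*K - a3*L) * sin (b*t))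
     = a4 * zsol a1 a2 a3 a4 z0 yp t - a3 * ysol a1 a2 a3 a4 z0 yp t"
    unfolding zsol_def ysol_def b_def[symmetric] K_def[symmetric] L_def[symmetric] by (simp add: algebra_simps)
  have fy: "ysol a1 a2 a3 a4 z0 yp = (\<lambda>t. exp ((a1 - a3) / 2 * t) * (yp * cos (b * t) + L * sin (b * t)))"
    by (rule ext) (simp add: ysol_def b_def L_def)
  have "(ysol a1 a2 a3 a4 z0 yp has_real_derivative (exp ((a1 - a3) / 2 * t) * ((a4*z0 - a3*yp) * cos (b*t) + (a4*K - a3*L) * sin (b*t)))) (at t)"
    unfolding fy by (rule D)
  then show ?thesis unfolding E .
qed
lemma exists_hit:
  fixes a1 a2 a3 a4 z0 yp :: real
  assumes pos: "a1 > 0" "a2 > 0" "a3 > 0" "a4 > 0"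
    and disc: "4 * a2 * a4 > (a1 + a3)^2"
    and z0: "z0 > 0" and yp: "0 \<le> yp" "yp < yzero a1 a2 z0"
  shows "\<exists>t. first_hit a1 a2 a3 a4 z0 yp t"
proof -
  define Z where "Z = zsol a1 a2 a3 a4 z0 yp"
  define Y where "Y = ysol a1 a2 a3 a4 z0 yp"
  define y0 where "y0 = yzero a1 a2 z0"
  define b where "b = beta a1 a2 a3 a4"
  have bpos: "b > 0" using bfacts[OF disc] b_def by simp
  have dZ: "\<And>t. (Z has_real_derivative (a1 * Z t - a2 * Y t)) (at t)"
    unfolding Z_def Y_def by (rule dz[OF disc])
  have dY: "\<And>t. (Y has_real_derivative (a4 * Z t - a3 * Y t)) (at t)"
    unfolding Z_def Y_def by (rule dy[OF disc])
  have contZ: "continuous_on A Z" for A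
    using DERIV_isCont[OF dZ] by (simp add: continuous_at_imp_continuous_on)
  have Z0: "Z 0 = z0" by (simp add: Z_def zsol_def)
  have y0: "y0 = z0 * a1 / a2" by (simp add: y0_def yzero_def)
  have ypy0: "yp < y0" using yp y0_def by simp
  have d0: "a1 * Z 0 - a2 * Y 0 > 0"
  proof -
    have "Y 0 = yp" by (simp add: Y_def ysol_def)
    moreover have "a2 * yp < a1 * z0" using ypy0 pos(2) unfolding y0 by (simp add: field_simps)
    ultimately show ?thesis using Z0 by simp
  qed
  obtain d where d: "d > 0" "\<And>h. h > 0 \<Longrightarrow> h < d \<Longrightarrow> Z 0 < Z (0 + h)"
    using DERIV_pos_inc_right[OF dZ d0] by blast
  have near0: "Z s > z0" if "0 < s" "s < d" for s using d(2)[of s] Z0 that by simp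
  have Zpi: "Z (pi / b) < z0"
  proof -
    have "b * (pi / b) = pi" using bpos by simp
    then have "Z (pi / b) = - z0 * exp ((a1 - a3) / 2 * (pi / b))"
      by (simp add: Z_def zsol_def b_def[symmetric])
    also have "... < z0"
    proof -
      have "0 < z0 * exp ((a1 - a3) / 2 * (pi / b))" using z0 by simp
      then show ?thesis using z0 by linarith
    qed
    finally show ?thesis .
  qed
  define m where "m = min d (pi / b)"
  define d' where "d' = m / 2"
  have pb: "pi / b > 0" using bpos by simp
  have mm: "m \<le> d" "m \<le> pi/b" "0 < m" using d(1) pb unfolding m_def by auto
  have d'1: "0 < d'" unfolding d'_def using mm by linarith
  have d'2: "d' < d" unfolding d'_def using mm by linarith
  have d'3: "d' < pi / b" unfolding d'_def using mm by linarith
  note d' = d'1 d'2 d'3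
  have Zd': "Z d' > z0" using near0 d' by simp
  define S where "S = {d'..pi/b} \<inter> {t. Z t = z0}"
  have Sne: "S \<noteq> {}"
  proof -
    obtain x where "d' \<le> x" "x \<le> pi / b" "Z x = z0"
      using IVT2'[of Z "pi/b" z0 d', OF less_imp_le[OF Zpi] less_imp_le[OF Zd'] less_imp_le[OF d'(3)] contZ] by blast
    then show ?thesis unfolding S_def by auto
  qed
  have Sbdd: "bdd_below S" unfolding S_def by (rule bdd_belowI[of _ d']) auto
  have Scl: "closed S" unfolding S_def
    by (intro closed_Int closed_atLeastAtMost closed_Collect_eq contZ continuous_on_const)
  define t1 where "t1 = Inf S"
  have t1S: "t1 \<in> S" unfolding t1_def using closed_contains_Inf[OF Sne Sbdd Scl] .
  have t1: "d' \<le> t1" "t1 \<le> pi / b" "Z t1 = z0" using t1S unfolding S_def by auto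
  have noz: "Z s \<noteq> z0" if "0 < s" "s < t1" for s
  proof
    assume "Z s = z0"
    show False
    proof (cases "s < d'")
      case True then show ?thesis using near0[of s] d'(2) that \<open>Z s = z0\<close> by simp
    next
      case False
      then have "s \<in> S" using that t1 \<open>Z s = z0\<close> unfolding S_def by auto
      then have "t1 \<le> s" unfolding t1_def using Sbdd by (rule cInf_lower)
      then show ?thesis using that by simp
    qed
  qed
  have gt: "Z s > z0" if "0 < s" "s < t1" for s
  proof (rule ccontr)
    assume "\<not> Z s > z0"
    then have "Z s \<le> z0" by simp
    have "d' \<le> s"
    proof (rule ccontr)
      assume "\<not> d' \<le> s"
      then have "s < d" using d'(2) by simp
      then show False using near0[of s] that(1) \<open>Z s \<le> z0\<close> by simp
    qed
    then obtain x where x: "d' \<le> x" "x \<le> s" "Z x = z0"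
      using IVT2'[of Z s z0 d', OF \<open>Z s \<le> z0\<close> less_imp_le[OF Zd'] _ contZ] by blast
    have "0 < x" "x < t1" using x d'(1) that by linarith+
    then show False using noz[of x] x(3) by simp
  qed
  have t1pos: "t1 > 0" using t1 d' by simp
  have a2a4: "a2 * a4 > a1 * a3"
  proof -
    have "(a1 + a3)^2 - 4 * a1 * a3 = (a1 - a3)^2" by (simp add: power2_eq_square algebra_simps)
    then have "(a1 + a3)^2 \<ge> 4 * a1 * a3" using zero_le_power2[of "a1 - a3"] by linarith
    then show ?thesis using disc by simp
  qed
  have Yt1: "Y t1 > y0"
  proof (rule ccontr)
    assume "\<not> Y t1 > y0"
    then consider "Y t1 < y0" | "Y t1 = y0" by linarith
    then show False
    proof cases
      case 1
      have "a1 * Z t1 - a2 * Y t1 > 0"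
        using 1 pos(2) unfolding t1(3) y0 by (simp add: field_simps)
      then obtain d2 where d2: "d2 > 0" "\<And>h. h > 0 \<Longrightarrow> h < d2 \<Longrightarrow> Z (t1 - h) < Z t1"
        using DERIV_pos_inc_left[OF dZ] by blast
      define h where "h = min d2 t1 / 2"
      have "Z (t1 - h) < z0" using d2(2)[of h] d2(1) t1pos t1(3) unfolding h_def by auto
      moreover have "Z (t1 - h) > z0" using gt[of "t1 - h"] d2(1) t1pos unfolding h_def by auto
      ultimately show False by simp
    next
      case 2
      define Z' where "Z' = (\<lambda>t. a1 * Z t - a2 * Y t)"
      have dZ': "(Z' has_real_derivative (a1 * (a1 * Z t1 - a2 * Y t1) - a2 * (a4 * Z t1 - a3 * Y t1))) (at t1)"
        unfolding Z'_def by (intro DERIV_diff DERIV_cmult dZ dY)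
      have Z't1: "Z' t1 = 0" using 2 t1(3) pos(2) unfolding Z'_def y0 by (simp add: field_simps)
      have "a4 * z0 - a3 * y0 > 0"
      proof -
        have "a4 * z0 - a3 * y0 = z0 * (a2 * a4 - a1 * a3) / a2" unfolding y0 using pos(2) by (simp add: field_simps)
        then show ?thesis using z0 a2a4 pos(2) by simp
      qed
      then have neg: "a1 * (a1 * Z t1 - a2 * Y t1) - a2 * (a4 * Z t1 - a3 * Y t1) < 0"
        using Z't1 2 t1(3) pos(2) unfolding Z'_def by simp
      obtain d3 where d3: "d3 > 0" "\<And>h. h > 0 \<Longrightarrow> h < d3 \<Longrightarrow> Z' t1 < Z' (t1 - h)"
        using DERIV_neg_dec_left[OF dZ' neg] by blast
      define h where "h = min d3 t1 / 2"
      have h: "0 < h" "h < d3" "h < t1" using d3(1) t1pos unfolding h_def by auto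
      have "Z (t1 - h) \<le> Z t1"
      proof (rule DERIV_nonneg_imp_increasing_open[of "t1 - h" t1 Z])
        show "t1 - h \<le> t1" using h by simp
        show "continuous_on {t1 - h..t1} Z" by (rule contZ)
        fix x assume x: "t1 - h < x" "x < t1"
        have "Z' x > 0" using d3(2)[of "t1 - x"] x h Z't1 by simp
        then show "\<exists>y. (Z has_real_derivative y) (at x) \<and> 0 \<le> y"
          using dZ[of x] unfolding Z'_def by (intro exI[of _ "a1 * Z x - a2 * Y x"]) simp
      qed
      moreover have "Z (t1 - h) > z0" using gt[of "t1 - h"] h by simp
      ultimately show False using t1(3) by simp
    qed
  qed
  have "first_hit a1 a2 a3 a4 z0 yp t1"
    unfolding first_hit_def on_halfline_def
    using t1pos t1(3) Yt1 noz unfolding Z_def Y_def y0_def by auto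
  then show ?thesis by blast
qed


lemma scale_z:
  assumes "a2 \<noteq> 0"
  shows "zsol a1 a2 a3 a4 z0 (\<alpha> * yzero a1 a2 z0) t = z0 * zsol a1 a2 a3 a4 1 (\<alpha> * (a1 / a2)) t"
  unfolding zsol_def yzero_def using assms by (simp add: algebra_simps diff_divide_distrib)

lemma scale_y:
  assumes "a2 \<noteq> 0"
  shows "ysol a1 a2 a3 a4 z0 (\<alpha> * yzero a1 a2 z0) t = z0 * ysol a1 a2 a3 a4 1 (\<alpha> * (a1 / a2)) t"
  unfolding ysol_def yzero_def using assms by (simp add: algebra_simps diff_divide_distrib)

lemma scale_hit:
  assumes "a2 \<noteq> 0" "z0 > 0"
  shows "first_hit a1 a2 a3 a4 z0 (\<alpha> * yzero a1 a2 z0) t \<longleftrightarrow> first_hit a1 a2 a3 a4 1 (\<alpha> * (a1 / a2)) t"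
proof -
  have "on_halfline a1 a2 a3 a4 z0 (\<alpha> * yzero a1 a2 z0) s \<longleftrightarrow> on_halfline a1 a2 a3 a4 1 (\<alpha> * (a1 / a2)) s" for s
  proof -
    have y: "yzero a1 a2 z0 = z0 * (a1 / a2)" "yzero a1 a2 1 = a1 / a2" unfolding yzero_def by simp_all
    have aux: "(z0*A = z0 \<and> z0*c < z0*B) \<longleftrightarrow> (A = 1 \<and> c < B)" for A B c
      using assms(2) by (simp add: mult_less_cancel_left_pos)
    show ?thesis unfolding on_halfline_def scale_z[OF assms(1)] scale_y[OF assms(1)]
      unfolding y by (rule aux)
  qed
  then show ?thesis unfolding first_hit_def by simp
qed

lemma hit_unique:
  assumes "first_hit a1 a2 a3 a4 z0 yp s" "first_hit a1 a2 a3 a4 z0 yp s'"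
  shows "s = s'"
proof (rule ccontr)
  assume "s \<noteq> s'"
  then consider "s < s'" | "s' < s" by linarith
  then show False using assms unfolding first_hit_def by cases auto
qed

theorem proposition1:
  fixes a1 a2 a3 a4 z0 :: real
  assumes "a1 > 0" "a2 > 0" "a3 > 0" "a4 > 0"
    and "4 * a2 * a4 > (a1 + a3)^2"
    and "z0 > 0"
  shows "(\<forall>yp \<in> {0..<yzero a1 a2 z0}.
            (\<exists>!t. first_hit a1 a2 a3 a4 z0 yp t) \<and>
            (\<exists>!yplus. yplus > yzero a1 a2 z0 \<and>
                (\<exists>t. first_hit a1 a2 a3 a4 z0 yp t \<and> ysol a1 a2 a3 a4 z0 yp t = yplus))) \<and>
         (\<forall>\<alpha> \<in> {0..<1}. \<forall>z0'. z0' > 0 \<longrightarrow> (\<forall>t.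
            first_hit a1 a2 a3 a4 z0 (\<alpha> * yzero a1 a2 z0) t \<longleftrightarrow>
            first_hit a1 a2 a3 a4 z0' (\<alpha> * yzero a1 a2 z0') t))"
proof (intro conjI ballI allI impI)
  fix yp assume yp: "yp \<in> {0..<yzero a1 a2 z0}"
  obtain t where t: "first_hit a1 a2 a3 a4 z0 yp t"
    using exists_hit[OF assms] yp by auto
  show "\<exists>!t. first_hit a1 a2 a3 a4 z0 yp t"
    using t hit_unique by blast
  have Yt: "ysol a1 a2 a3 a4 z0 yp t > yzero a1 a2 z0"
    using t unfolding first_hit_def on_halfline_def by simp
  show "\<exists>!yplus. yplus > yzero a1 a2 z0 \<and>
                (\<exists>t. first_hit a1 a2 a3 a4 z0 yp t \<and> ysol a1 a2 a3 a4 z0 yp t = yplus)"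
    using t Yt hit_unique[OF t] by blast
next
  fix \<alpha> z0' t :: real
  assume "z0' > 0"
  then show "first_hit a1 a2 a3 a4 z0 (\<alpha> * yzero a1 a2 z0) t \<longleftrightarrow>
            first_hit a1 a2 a3 a4 z0' (\<alpha> * yzero a1 a2 z0') t"
    using scale_hit[of a2 z0] scale_hit[of a2 z0'] assms by simp
qed

end
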